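(* Let $f\ge0$ be integrable on $[-\pi,\pi]$ with $\int f>0$ and such that $\lim_{n\to\infty}\sigma_{n+1}^2(f)/\sigma_n^2(f)=1$. If $g$ is a nonnegative, bounded, measurable function on $[-\pi,\pi]$ that is continuous at $\lambda=0$, then $$\limsup_{n\to\infty}\frac{\sigma_n^2(fg)}{\sigma_n^2(f)}\le g(0).$$
   Context: For a nonnegative integrable weight $w$ on $[-\pi,\pi]$, $\sigma_n^2(w)=\min_{q\in\mathcal{Q}_n(1)}\int_{-\pi}^{\pi}|q(e^{i\lambda})|^2w(\lambda)\,d\lambda$, where $\mathcal{Q}_n(1)$ is the set of complex polynomials of degree at most $n$ with $q(1)=1$. *)

theory Defs
  imports "HOL-Analysis.Analysis" "HOL-Computational_Algebra.Polynomial"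
begin

definition Qn1 :: "nat \<Rightarrow> complex poly set" where
  "Qn1 n = {q. degree q \<le> n \<and> poly q 1 = 1}"

definition sigma2 :: "nat \<Rightarrow> (real \<Rightarrow> real) \<Rightarrow> real" where
  "sigma2 n w = (INF q \<in> Qn1 n. LINT x:{-pi..pi}|lborel. (cmod (poly q (cis x)))\<^sup>2 * w x)"

end

theory Submission
  imports Defs
begin

lemma si_help:
  fixes f g P :: "real \<Rightarrow> real"
  assumes f: "set_integrable lborel S f" and g: "set_borel_measurable lborel S g"
    and gB: "\<forall>x\<in>S. \<bar>g x\<bar> \<le> B" and P: "continuous_on UNIV P" and S: "compact S"
  shows "set_integrable lborel S (\<lambda>x. P x * (f x * g x))"
proof -
  have "bounded (P ` S)"
    using compact_continuous_image[OF continuous_on_subset[OF P] S] compact_imp_bounded by auto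
  then obtain C where C: "C > 0" "\<forall>x\<in>S. \<bar>P x\<bar> \<le> C"
    unfolding bounded_pos by auto
  have m1: "(\<lambda>x. indicator S x *\<^sub>R f x) \<in> borel_measurable lborel"
    using f unfolding set_integrable_def by (rule borel_measurable_integrable)
  have m2: "(\<lambda>x. indicator S x *\<^sub>R g x) \<in> borel_measurable lborel"
    using g unfolding set_borel_measurable_def .
  have mP: "P \<in> borel_measurable lborel"
    using borel_measurable_continuous_onI[OF P] by simp
  have eq: "(\<lambda>x. indicator S x *\<^sub>R (P x * (f x * g x))) =
     (\<lambda>x. P x * (indicator S x *\<^sub>R f x) * (indicator S x *\<^sub>R g x))"
    by (auto simp: indicator_def fun_eq_iff)
  have fi: "integrable lborel (\<lambda>x. indicator S x *\<^sub>R f x)"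
    using f unfolding set_integrable_def .
  show ?thesis unfolding set_integrable_def eq
  proof (rule Bochner_Integration.integrable_bound[where f="\<lambda>x. C * B * \<bar>indicator S x *\<^sub>R f x\<bar>"])
    show "integrable lborel (\<lambda>x. C * B * \<bar>indicator S x *\<^sub>R f x\<bar>)"
      using fi by (intro integrable_mult_right integrable_abs)
    show "(\<lambda>x. P x * (indicator S x *\<^sub>R f x) * (indicator S x *\<^sub>R g x)) \<in> borel_measurable lborel"
      using m1 m2 mP by measurable
    show "AE x in lborel. norm (P x * (indicator S x *\<^sub>R f x) * (indicator S x *\<^sub>R g x))
        \<le> norm (C * B * \<bar>indicator S x *\<^sub>R f x\<bar>)"
    proof (rule AE_I2)
      fix x
      show "norm (P x * (indicator S x *\<^sub>R f x) * (indicator S x *\<^sub>R g x))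
        \<le> norm (C * B * \<bar>indicator S x *\<^sub>R f x\<bar>)"
      proof (cases "x \<in> S")
        case True
        have B0: "0 \<le> B" using gB True by force
        have "\<bar>P x * f x * g x\<bar> = \<bar>P x\<bar> * \<bar>f x\<bar> * \<bar>g x\<bar>" by (simp add: abs_mult)
        also have "\<dots> \<le> C * \<bar>f x\<bar> * B"
          using C True gB by (intro mult_mono) auto
        finally show ?thesis using True C B0 by (simp add: abs_mult mult_ac)
      qed simp
    qed
  qed
qed


lemma h_norm:
  fixes x :: real
  shows "(cmod (poly ([:1/2, 1/2:] ^ k) (cis x)))\<^sup>2 = ((1 + cos x) / 2) ^ k"
proof -
  have "poly ([:1/2, 1/2:] ^ k) (cis x) = ((1 + cis x) / 2) ^ k"
    by (simp add: poly_power add_divide_distrib)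
  note A = this
  have B: "(cmod ((1 + cis x) / 2))\<^sup>2 = (1 + cos x) / 2"
  proof -
    have "(cmod ((1 + cis x) / 2))\<^sup>2 = ((1 + cos x)^2 + (sin x)^2) / 4"
      by (simp add: cmod_power2 power_divide)
    also have "\<dots> = (1 + cos x) / 2"
    proof -
      have "(1 + cos x)^2 + (sin x)^2 = 1 + 2 * cos x + ((sin x)^2 + (cos x)^2)"
        by (simp add: power2_eq_square algebra_simps)
      also have "\<dots> = 2 + 2 * cos x" by simp
      finally show ?thesis by simp
    qed
    finally show ?thesis .
  qed
  have "(cmod (poly ([:1/2, 1/2:] ^ k) (cis x)))\<^sup>2 = (cmod ((1 + cis x) / 2) ^ k)\<^sup>2"
    using A by (simp only: norm_power)
  also have "\<dots> = ((cmod ((1 + cis x) / 2))\<^sup>2) ^ k" by (metis power_mult mult.commute)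
  also have "\<dots> = ((1 + cos x) / 2) ^ k" by (simp only: B)
  finally show ?thesis .
qed

theorem lemma5p4:
  fixes f g :: "real \<Rightarrow> real"
  assumes f_nonneg: "\<forall>x\<in>{-pi..pi}. f x \<ge> 0"
    and f_int: "set_integrable lborel {-pi..pi} f"
    and f_pos: "(LINT x:{-pi..pi}|lborel. f x) > 0"
    and f_ratio: "(\<lambda>n. sigma2 (Suc n) f / sigma2 n f) \<longlonglongrightarrow> 1"
    and g_nonneg: "\<forall>x\<in>{-pi..pi}. g x \<ge> 0"
    and g_bdd: "bounded (g ` {-pi..pi})"
    and g_meas: "set_borel_measurable lborel {-pi..pi} g"
    and g_cont: "continuous (at 0 within {-pi..pi}) g"
  shows "limsup (\<lambda>n. ereal (sigma2 n (\<lambda>x. f x * g x) / sigma2 n f)) \<le> ereal (g 0)"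
proof -
  define S where "S = {-pi..pi}"
  define s where "s n = sigma2 n f" for n
  define t where "t n = sigma2 n (\<lambda>x. f x * g x)" for n
  obtain B where B: "B > 0" "\<forall>x\<in>S. \<bar>g x\<bar> \<le> B"
    using g_bdd unfolding bounded_pos S_def by auto
  have cS: "compact S" unfolding S_def by simp
  have contP: "continuous_on UNIV (\<lambda>x. (cmod (poly q (cis x)))\<^sup>2)" for q :: "complex poly"
    by (intro continuous_intros continuous_on_poly) 
  have intfg: "set_integrable lborel S (\<lambda>x. (cmod (poly q (cis x)))\<^sup>2 * (f x * g x))" for q
    using si_help[OF f_int[folded S_def] g_meas[folded S_def] B(2) contP cS] .
  have intf: "set_integrable lborel S (\<lambda>x. (cmod (poly q (cis x)))\<^sup>2 * f x)" for q
  proof -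
    have "set_integrable lborel S (\<lambda>x. (cmod (poly q (cis x)))\<^sup>2 * (f x * (\<lambda>_. 1::real) x))"
      by (rule si_help[OF f_int[folded S_def] _ _ contP cS, of _ 1]) (auto simp: set_borel_measurable_def S_def intro!: borel_measurable_indicator)
    then show ?thesis by simp
  qed
  have one: "(1::complex poly) \<in> Qn1 n" for n unfolding Qn1_def by simp
  have nnf: "0 \<le> (LINT x:S|lborel. (cmod (poly q (cis x)))\<^sup>2 * f x)" for q
    unfolding set_lebesgue_integral_def S_def
    using f_nonneg by (intro Bochner_Integration.integral_nonneg) (auto simp: indicator_def)
  have nnfg: "0 \<le> (LINT x:S|lborel. (cmod (poly q (cis x)))\<^sup>2 * (f x * g x))" for q
    unfolding set_lebesgue_integral_def S_def
    using f_nonneg g_nonneg by (intro Bochner_Integration.integral_nonneg) (auto simp: indicator_def)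
  have bddfg: "bdd_below ((\<lambda>q. LINT x:S|lborel. (cmod (poly q (cis x)))\<^sup>2 * (f x * g x)) ` Qn1 n)" for n
    using nnfg by (intro bdd_belowI[of _ 0]) auto
  have s_nonneg: "0 \<le> s n" for n
    unfolding s_def sigma2_def S_def[symmetric]
    using one nnf by (intro cINF_greatest) auto
  have key: "t (n+k) \<le> c * s n"
    if c: "c > 0" and hc: "\<forall>x\<in>S. (cmod (poly ([:1/2, 1/2:] ^ k) (cis x)))\<^sup>2 * g x \<le> c" for n k c
  proof -
    let ?h = "[:1/2, 1/2:] ^ k :: complex poly"
    have "t (n+k) / c \<le> s n" unfolding s_def sigma2_def S_def[symmetric]
    proof (rule cINF_greatest)
      show "Qn1 n \<noteq> {}" using one by auto
      fix q assume q: "q \<in> Qn1 n"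
      have "degree (q * ?h) \<le> n + k"
      proof -
        have "degree (q * ?h) \<le> degree q + degree ?h" by (rule degree_mult_le)
        moreover have "degree ?h \<le> k"
          using degree_power_le[of "[:1/2, 1/2::complex:]" k] by simp
        ultimately show ?thesis using q unfolding Qn1_def by auto
      qed
      then have qh: "q * ?h \<in> Qn1 (n+k)" using q unfolding Qn1_def by (simp add: poly_power)
      have "t (n+k) \<le> (LINT x:S|lborel. (cmod (poly (q * ?h) (cis x)))\<^sup>2 * (f x * g x))"
        unfolding t_def sigma2_def S_def[symmetric] by (rule cINF_lower[OF bddfg qh])
      also have "\<dots> \<le> (LINT x:S|lborel. (cmod (poly q (cis x)))\<^sup>2 * f x * c)"
      proof (rule set_integral_mono[OF intfg])
        show "set_integrable lborel S (\<lambda>x. (cmod (poly q (cis x)))\<^sup>2 * f x * c)"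
          by (rule set_integrable_mult_left) (rule intf)
        fix x assume x: "x \<in> S"
        have "(cmod (poly (q * ?h) (cis x)))\<^sup>2 * (f x * g x) =
           ((cmod (poly q (cis x)))\<^sup>2 * f x) * ((cmod (poly ?h (cis x)))\<^sup>2 * g x)"
          by (simp add: norm_mult power_mult_distrib)
        also have "\<dots> \<le> ((cmod (poly q (cis x)))\<^sup>2 * f x) * c"
          using hc x f_nonneg unfolding S_def by (intro mult_left_mono) auto
        finally show "(cmod (poly (q * ?h) (cis x)))\<^sup>2 * (f x * g x) \<le> (cmod (poly q (cis x)))\<^sup>2 * f x * c" .
      qed
      also have "\<dots> = (LINT x:S|lborel. (cmod (poly q (cis x)))\<^sup>2 * f x) * c"
        by simp
      finally show "t (n+k) / c \<le> (LINT x:S|lborel. (cmod (poly q (cis x)))\<^sup>2 * f x)"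
        using c by (simp add: field_simps)
    qed
    then show ?thesis using c by (simp add: field_simps)
  qed

  have ev: "eventually (\<lambda>n. s n \<noteq> 0) sequentially"
  proof -
    have "eventually (\<lambda>n. s (Suc n) / s n > 1/2) sequentially"
      using order_tendstoD(1)[OF f_ratio[folded s_def], of "1/2"] by simp
    then show ?thesis by (rule eventually_mono) auto
  qed
  have rk: "(\<lambda>n. s (n+k) / s n) \<longlonglongrightarrow> 1" for k
  proof (induction k)
    case 0
    have "eventually (\<lambda>n. s (n+0) / s n = 1) sequentially"
      using ev by (rule eventually_mono) simp
    then show ?case by (rule tendsto_eventually)
  next
    case (Suc k)
    have r: "(\<lambda>n. s (Suc (n+k)) / s (n+k)) \<longlonglongrightarrow> 1"
      using LIMSEQ_ignore_initial_segment[OF f_ratio[folded s_def], of k] by simp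
    have "(\<lambda>n. s (Suc (n+k)) / s (n+k) * (s (n+k) / s n)) \<longlonglongrightarrow> 1 * 1"
      by (intro tendsto_mult r Suc.IH)
    moreover have "eventually (\<lambda>n. s (Suc (n+k)) / s (n+k) * (s (n+k) / s n) = s (n + Suc k) / s n) sequentially"
    proof -
      have "eventually (\<lambda>n. s (n+k) \<noteq> 0) sequentially"
        using ev unfolding eventually_sequentially by (metis le_add1 order_trans)
      then show ?thesis by (rule eventually_mono) simp
    qed
    ultimately show ?case using Lim_transform_eventually by fastforce
  qed
  have rinv: "(\<lambda>n. s n / s (n+k)) \<longlonglongrightarrow> 1" for k
    using tendsto_inverse[OF rk[of k]] by (simp add: inverse_divide)
  have g0: "0 \<le> g 0" using g_nonneg by simp
  show ?thesis
  proof (rule ereal_le_epsilon2)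
    fix e :: real assume e: "0 < e"
    define e' where "e' = e / 3"
    have e': "0 < e'" using e unfolding e'_def by simp
    obtain \<delta> where \<delta>: "\<delta> > 0" "\<forall>x\<in>S. dist x 0 < \<delta> \<longrightarrow> dist (g x) (g 0) < e'"
      using g_cont e' unfolding continuous_within_eps_delta S_def by blast
    define d where "d = min \<delta> pi"
    have d: "0 < d" "d \<le> pi" "d \<le> \<delta>" using \<delta> unfolding d_def by auto
    define \<rho> where "\<rho> = (1 + cos d) / 2"
    have "cos d < cos 0" using d by (intro cos_monotone_0_pi) auto
    then have \<rho>1: "\<rho> < 1" unfolding \<rho>_def by simp
    obtain k where k: "\<rho> ^ k < e' / B" using real_arch_pow_inv[OF _ \<rho>1, of "e'/B"] e' B by auto
    define c where "c = g 0 + 2 * e'"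
    have c: "c > 0" using g0 e' unfolding c_def by simp
    have hc: "\<forall>x\<in>S. (cmod (poly ([:1/2, 1/2:] ^ k) (cis x)))\<^sup>2 * g x \<le> c"
    proof
      fix x assume x: "x \<in> S"
      have gx: "0 \<le> g x" using x g_nonneg unfolding S_def by auto
      have "0 \<le> 1 + cos x" using cos_ge_minus_one[of x] by linarith
      then have hx0: "0 \<le> (1 + cos x) / 2" by simp
      have "((1 + cos x) / 2) ^ k * g x \<le> c"
      proof (cases "\<bar>x\<bar> < d")
        case True
        have "g x < g 0 + e'" using \<delta>(2) x True d by (auto simp: dist_real_def)
        moreover have "((1 + cos x) / 2) ^ k \<le> 1" using hx0 by (intro power_le_one) auto
        ultimately have "((1 + cos x) / 2) ^ k * g x \<le> 1 * (g 0 + e')"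
          using gx by (intro mult_mono) auto
        then show ?thesis unfolding c_def using e' by simp
      next
        case False
        have "\<bar>x\<bar> \<le> pi" using x unfolding S_def by auto
        then have "cos \<bar>x\<bar> \<le> cos d" using False d by (intro cos_monotone_0_pi_le) auto
        then have "(1 + cos x) / 2 \<le> \<rho>" unfolding \<rho>_def by simp
        then have "((1 + cos x) / 2) ^ k \<le> \<rho> ^ k" using hx0 by (intro power_mono) auto
        moreover have "g x \<le> B" using B(2) x by force
        moreover have "0 \<le> \<rho> ^ k"
          using \<open>((1 + cos x) / 2) ^ k \<le> \<rho> ^ k\<close> zero_le_power[OF hx0, of k] by linarith
        ultimately have "((1 + cos x) / 2) ^ k * g x \<le> \<rho> ^ k * B"
          using gx hx0 by (intro mult_mono) auto
        also have "\<dots> < e'" using k B by (simp add: field_simps)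
        finally show ?thesis unfolding c_def using g0 e' by simp
      qed
      then show "(cmod (poly ([:1/2, 1/2:] ^ k) (cis x)))\<^sup>2 * g x \<le> c"
        by (simp only: h_norm)
    qed
    have lim: "(\<lambda>n. c * (s n / s (n+k))) \<longlonglongrightarrow> c * 1"
      by (intro tendsto_mult tendsto_const rinv)
    have "eventually (\<lambda>n. c * (s n / s (n+k)) < c + e') sequentially"
      using order_tendstoD(2)[OF lim, of "c + e'"] e' by simp
    then have "eventually (\<lambda>n. t (n+k) / s (n+k) \<le> g 0 + e) sequentially"
    proof (rule eventually_mono)
      fix n assume n: "c * (s n / s (n+k)) < c + e'"
      have "t (n+k) / s (n+k) \<le> c * s n / s (n+k)"
        using key[OF c hc, of n] s_nonneg[of "n+k"] by (rule divide_right_mono)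
      also have "\<dots> < c + e'" using n by simp
      finally show "t (n+k) / s (n+k) \<le> g 0 + e" unfolding c_def e'_def by simp
    qed
    then have "eventually (\<lambda>N. t N / s N \<le> g 0 + e) sequentially"
    proof -
      assume "eventually (\<lambda>n. t (n+k) / s (n+k) \<le> g 0 + e) sequentially"
      then obtain n0 where n0: "\<forall>n\<ge>n0. t (n+k) / s (n+k) \<le> g 0 + e"
        unfolding eventually_sequentially by blast
      show ?thesis unfolding eventually_sequentially
      proof (intro exI allI impI)
        fix N assume "n0 + k \<le> N"
        then show "t N / s N \<le> g 0 + e" using n0[rule_format, of "N - k"] by simp
      qed
    qed
    then have "eventually (\<lambda>N. ereal (t N / s N) \<le> ereal (g 0 + e)) sequentially"
      by (rule eventually_mono) simp
    then have "limsup (\<lambda>N. ereal (t N / s N)) \<le> ereal (g 0 + e)"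
      by (rule Limsup_bounded)
    then show "limsup (\<lambda>n. ereal (sigma2 n (\<lambda>x. f x * g x) / sigma2 n f)) \<le> ereal (g 0) + ereal e"
      unfolding t_def s_def by simp
  qed
qed
end
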